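(* Let $S$ be an inverse semigroup that is a mirror semigroup and is continuous. Then $S$ is separately Scott-continuous.
   Context: An inverse semigroup is a semigroup $S$ in which every $s$ has a unique $s^*$ with $ss^*s=s$ and $s^*ss^*=s^*$. $\Sigma=\Sigma(S)$ is the set of idempotents. The intrinsic order is $s\leqslant t$ iff $s=t\epsilon$ for some idempotent $\epsilon$. A subset is directed if nonempty and any two elements have an upper bound in it. $S$ is a mirror semigroup if every directed subset of $\Sigma$ having a supremum in $(\Sigma,\leqslant)$ also has a supremum in $(S,\leqslant)$. In a poset, $x$ is way-below $y$ ($x\ll y$) if for every directed subset $D$ that has a supremum with $y\leqslant \sup D$, there is $d\in D$ with $x\leqslant d$. A poset is continuous if for every element $s$ the set $\{t : t\ll s\}$ is directed with supremum $s$; $S$ is continuous if $(S,\leqslant)$ is. $S$ is separately Scott-continuous if for every directed $D\subseteq S$ with a supremum $\bigvee D$ in $S$ and every $s\in S$, $\bigvee(Ds)$ exists in $S$ and equals $(\bigvee D)s$. *)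

theory Defs
  imports Main
begin

definition inverse_semigroup :: "'a::semigroup_mult itself \<Rightarrow> bool" where
  "inverse_semigroup _ \<longleftrightarrow> (\<forall>s::'a. \<exists>!t. s * t * s = s \<and> t * s * t = t)"

definition idempotents :: "'a::semigroup_mult set" where
  "idempotents = {e. e * e = e}"

definition intr_le :: "'a::semigroup_mult \<Rightarrow> 'a \<Rightarrow> bool" where
  "intr_le s t \<longleftrightarrow> (\<exists>e\<in>idempotents. s = t * e)"

definition is_upper :: "('a \<Rightarrow> 'a \<Rightarrow> bool) \<Rightarrow> 'a set \<Rightarrow> 'a \<Rightarrow> bool" where
  "is_upper le D u \<longleftrightarrow> (\<forall>d\<in>D. le d u)"

definition is_sup :: "('a \<Rightarrow> 'a \<Rightarrow> bool) \<Rightarrow> 'a set \<Rightarrow> 'a set \<Rightarrow> 'a \<Rightarrow> bool" where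
  "is_sup le P D u \<longleftrightarrow> u \<in> P \<and> is_upper le D u \<and>
     (\<forall>v\<in>P. is_upper le D v \<longrightarrow> le u v)"

definition has_sup :: "('a \<Rightarrow> 'a \<Rightarrow> bool) \<Rightarrow> 'a set \<Rightarrow> 'a set \<Rightarrow> bool" where
  "has_sup le P D \<longleftrightarrow> (\<exists>u. is_sup le P D u)"

definition directed :: "('a \<Rightarrow> 'a \<Rightarrow> bool) \<Rightarrow> 'a set \<Rightarrow> bool" where
  "directed le D \<longleftrightarrow> D \<noteq> {} \<and> (\<forall>x\<in>D. \<forall>y\<in>D. \<exists>z\<in>D. le x z \<and> le y z)"

definition way_below :: "('a \<Rightarrow> 'a \<Rightarrow> bool) \<Rightarrow> 'a set \<Rightarrow> 'a \<Rightarrow> 'a \<Rightarrow> bool" where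
  "way_below le P x y \<longleftrightarrow>
     (\<forall>D u. D \<subseteq> P \<and> directed le D \<and> is_sup le P D u \<and> le y u \<longrightarrow> (\<exists>d\<in>D. le x d))"

definition continuous_poset :: "('a \<Rightarrow> 'a \<Rightarrow> bool) \<Rightarrow> 'a set \<Rightarrow> bool" where
  "continuous_poset le P \<longleftrightarrow>
     (\<forall>s\<in>P. directed le {t\<in>P. way_below le P t s} \<and> is_sup le P {t\<in>P. way_below le P t s} s)"

definition mirror_semigroup :: "'a::semigroup_mult itself \<Rightarrow> bool" where
  "mirror_semigroup _ \<longleftrightarrow>
     (\<forall>D::'a set. D \<subseteq> idempotents \<and> directed intr_le D \<and> has_sup intr_le idempotents D
        \<longrightarrow> has_sup intr_le UNIV D)"

definition continuous_semigroup :: "'a::semigroup_mult itself \<Rightarrow> bool" where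
  "continuous_semigroup _ \<longleftrightarrow> continuous_poset (intr_le :: 'a \<Rightarrow> 'a \<Rightarrow> bool) UNIV"

definition separately_scott_continuous :: "'a::semigroup_mult itself \<Rightarrow> bool" where
  "separately_scott_continuous _ \<longleftrightarrow>
     (\<forall>(D::'a set) u s. directed intr_le D \<and> is_sup intr_le UNIV D u
        \<longrightarrow> is_sup intr_le UNIV ((\<lambda>d. d * s) ` D) (u * s))"

end

theory Submission
  imports Defs
begin

definition iv :: "'a::semigroup_mult \<Rightarrow> 'a" where
  "iv s = (THE t. s*t*s = s \<and> t*s*t = t)"

context
  assumes INV: "inverse_semigroup TYPE('a::semigroup_mult)"
begin

lemma iv_ex: "(s::'a) * iv s * s = s \<and> iv s * s * iv s = iv s"
proof -
  have "\<exists>!t. s * t * s = s \<and> t * s * t = t" using INV unfolding inverse_semigroup_def by blast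
  then show ?thesis unfolding iv_def by (rule theI')
qed

lemma iv_uniq: "(s::'a) * t * s = s \<Longrightarrow> t * s * t = t \<Longrightarrow> t = iv s"
proof -
  assume a: "s * t * s = s" "t * s * t = t"
  have "\<exists>!t. s * t * s = s \<and> t * s * t = t" using INV unfolding inverse_semigroup_def by blast
  then show ?thesis using a iv_ex[of s] by blast
qed

lemma iv1[simp]: "(s::'a) * iv s * s = s" using iv_ex by blast
lemma iv2[simp]: "iv (s::'a) * s * iv s = iv s" using iv_ex by blast
lemma iv1'[simp]: "(s::'a) * (iv s * s) = s" using iv1 by (simp add: mult.assoc)
lemma iv2'[simp]: "iv (s::'a) * (s * iv s) = iv s" using iv2 by (simp add: mult.assoc)

lemma iv1''[simp]: "(s::'a) * (iv s * (s * x)) = s * x" using iv1 by (metis mult.assoc)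
lemma iv2''[simp]: "iv (s::'a) * (s * (iv s * x)) = iv s * x" using iv2 by (metis mult.assoc)
lemma idem_assoc: "(e::'a) * e = e \<Longrightarrow> e * (e * x) = e * x" by (metis mult.assoc)

lemma idem_prod_idem:
  assumes e: "(e::'a) * e = e" and f: "f * f = f"
  shows "(e * f) * (e * f) = e * f"
proof -
  define x where "x = iv (e*f)"
  have x1: "e*f*x*(e*f) = e*f" and x2: "x*(e*f)*x = x" using iv_ex[of "e*f"] x_def by auto
  have "(e*f)*(f*x*e)*(e*f) = e*f*x*(e*f)"
    by (metis e f mult.assoc)
  also have "\<dots> = e*f" by (rule x1)
  finally have y1: "(e*f)*(f*x*e)*(e*f) = e*f" .
  have "(f*x*e)*(e*f)*(f*x*e) = f*(x*(e*f)*x)*e"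
    by (metis e f mult.assoc)
  also have "\<dots> = f*x*e" by (simp only: x2)
  finally have y2: "(f*x*e)*(e*f)*(f*x*e) = f*x*e" .
  have xe: "x = f*x*e" using iv_uniq[OF y1 y2] x_def by simp
  have xx: "x*x = x"
  proof -
    have "x*x = (f*x*e)*(f*x*e)" using xe by simp
    also have "\<dots> = f*(x*(e*f)*x)*e" by (simp add: mult.assoc)
    also have "\<dots> = f*x*e" by (simp only: x2)
    finally show ?thesis using xe by simp
  qed
  have a1: "x*(e*f)*x = x" by (rule x2)
  have a2: "(e*f)*x*(e*f) = e*f" by (rule x1)
  have b1: "x*x*x = x" using xx by simp
  have "e*f = iv x" using iv_uniq[OF a1 a2] .
  moreover have "x = iv x" using iv_uniq[OF b1 b1] .
  ultimately have "e*f = x" by simp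
  then show ?thesis using xx by simp
qed

lemma idem_comm:
  assumes e: "(e::'a) * e = e" and f: "f * f = f"
  shows "e * f = f * e"
proof -
  have ef: "(e*f)*(e*f) = e*f" using idem_prod_idem[OF e f] .
  have fe: "(f*e)*(f*e) = f*e" using idem_prod_idem[OF f e] .
  have c1: "(e*f)*(f*e)*(e*f) = e*f"
  proof -
    have "(e*f)*(f*e)*(e*f) = e*(f*f)*(e*e)*f" by (simp add: mult.assoc)
    also have "\<dots> = (e*f)*(e*f)" using e f by (simp add: mult.assoc)
    finally show ?thesis using ef by simp
  qed
  have c2: "(f*e)*(e*f)*(f*e) = f*e"
  proof -
    have "(f*e)*(e*f)*(f*e) = f*(e*e)*(f*f)*e" by (simp add: mult.assoc)
    also have "\<dots> = (f*e)*(f*e)" using e f by (simp add: mult.assoc)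
    finally show ?thesis using fe by simp
  qed
  have d1: "(e*f)*(e*f)*(e*f) = e*f" using ef by simp
  have "f*e = iv (e*f)" using iv_uniq[OF c1 c2] .
  moreover have "e*f = iv (e*f)" using iv_uniq[OF d1 d1] .
  ultimately show ?thesis by simp
qed

lemma idem_ivs[simp]: "(iv (s::'a) * s) * (iv s * s) = iv s * s"
proof -
  have "(iv s * s) * (iv s * s) = (iv s * s * iv s) * s" by (simp only: mult.assoc)
  then show ?thesis by simp
qed
lemma idem_siv[simp]: "((s::'a) * iv s) * (s * iv s) = s * iv s"
proof -
  have "(s * iv s) * (s * iv s) = (s * iv s * s) * iv s" by (simp only: mult.assoc)
  then show ?thesis by simp
qed
lemma iv_iv[simp]: "iv (iv (s::'a)) = s"
  using iv_uniq[of "iv s" s] by simp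
lemma iv_idem: "(e::'a) * e = e \<Longrightarrow> iv e = e"
  using iv_uniq[of e e] by simp

lemma iv_mult: "iv ((s::'a) * t) = iv t * iv s"
proof -
  have c: "(t * iv t) * (iv s * s) = (iv s * s) * (t * iv t)"
    by (rule idem_comm) simp_all
  have 1: "(s*t)*(iv t * iv s)*(s*t) = s*t"
  proof -
    have "(s*t)*(iv t * iv s)*(s*t) = s*((t * iv t) * (iv s * s))*t" by (simp add: mult.assoc)
    also have "\<dots> = s*((iv s * s) * (t * iv t))*t" using c by simp
    also have "\<dots> = (s * iv s * s)*(t * iv t * t)" by (simp add: mult.assoc)
    finally show ?thesis by simp
  qed
  have 2: "(iv t * iv s)*(s*t)*(iv t * iv s) = iv t * iv s"
  proof -
    have "(iv t * iv s)*(s*t)*(iv t * iv s) = iv t*((iv s * s) * (t * iv t))*iv s" by (simp add: mult.assoc)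
    also have "\<dots> = iv t*((t * iv t) * (iv s * s))*iv s" using c by simp
    also have "\<dots> = (iv t * t * iv t)*(iv s * s * iv s)" by (simp add: mult.assoc)
    finally show ?thesis by simp
  qed
  show ?thesis using iv_uniq[OF 1 2] by simp
qed

lemma idempotents_iff: "e \<in> idempotents \<longleftrightarrow> e * e = e"
  by (simp add: idempotents_def)

lemma le_right: "intr_le (s::'a) t \<longleftrightarrow> s = t * (iv s * s)"
proof
  assume "intr_le s t"
  then obtain e where e: "e * e = e" "s = t * e" by (auto simp: intr_le_def idempotents_def)
  have c: "e * (iv t * t) = (iv t * t) * e" by (rule idem_comm) (simp_all add: e)
  have "iv s * s = e * iv t * t * e" using e iv_mult[of t e] iv_idem[of e] by (simp add: mult.assoc idem_assoc)
  then have "t * (iv s * s) = t * (e * (iv t * t)) * e" by (simp add: mult.assoc)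
  also have "\<dots> = (t * iv t * t) * (e * e)" using c by (simp add: mult.assoc)
  finally show "s = t * (iv s * s)" using e by simp
next
  assume "s = t * (iv s * s)"
  then show "intr_le s t" unfolding intr_le_def idempotents_def by (intro bexI[of _ "iv s * s"]) auto
qed

lemma le_left: "intr_le (s::'a) t \<longleftrightarrow> (\<exists>f. f * f = f \<and> s = f * t)"
proof
  assume "intr_le s t"
  then obtain e where e: "e * e = e" "s = t * e" by (auto simp: intr_le_def idempotents_def)
  have c: "e * (iv t * t) = (iv t * t) * e" by (rule idem_comm) (simp_all add: e)
  have 1: "(t*e*iv t)*(t*e*iv t) = t*e*iv t"
  proof -
    have "(t*e*iv t)*(t*e*iv t) = t*(e*(iv t * t))*e*iv t" by (simp add: mult.assoc)
    also have "\<dots> = (t*iv t*t)*(e*e)*iv t" using c by (simp add: mult.assoc)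
    finally show ?thesis using e by simp
  qed
  have 2: "(t*e*iv t)*t = s"
  proof -
    have "(t*e*iv t)*t = t*(e*(iv t * t))" by (simp add: mult.assoc)
    also have "\<dots> = (t*iv t*t)*e" using c by (simp add: mult.assoc)
    finally show ?thesis using e by simp
  qed
  show "\<exists>f. f * f = f \<and> s = f * t" using 1 2 by (intro exI[of _ "t*e*iv t"]) simp
next
  assume "\<exists>f. f * f = f \<and> s = f * t"
  then obtain f where f: "f * f = f" "s = f * t" by blast
  have c: "f * (t * iv t) = (t * iv t) * f" by (rule idem_comm) (simp_all add: f)
  have "iv s * s = iv t * f * t" using f iv_mult[of f t] iv_idem[of f] by (simp add: mult.assoc idem_assoc)
  then have "t * (iv s * s) = (f * (t * iv t)) * t" using c by (simp add: mult.assoc)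
  also have "\<dots> = f * (t * iv t * t)" by (simp add: mult.assoc)
  finally show "intr_le s t" using f le_right by simp
qed

lemma le_refl: "intr_le (s::'a) s"
  using le_right by simp

lemma le_trans: "intr_le (s::'a) t \<Longrightarrow> intr_le t r \<Longrightarrow> intr_le s r"
proof -
  assume "intr_le s t" "intr_le t r"
  then obtain e f where "e*e=e" "s=t*e" "f*f=f" "t=r*f" by (auto simp: intr_le_def idempotents_def)
  then have "s = r*(f*e)" "(f*e)*(f*e) = f*e" using idem_prod_idem[of f e] by (auto simp: mult.assoc)
  then show ?thesis unfolding intr_le_def idempotents_def by blast
qed

lemma le_antisym: "intr_le (s::'a) t \<Longrightarrow> intr_le t s \<Longrightarrow> s = t"
proof -
  assume a: "intr_le s t" "intr_le t s"
  then obtain e f where e: "e*e = e" "s = t*e" and f: "f*f=f" "t = s*f"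
    by (auto simp: intr_le_def idempotents_def)
  have c: "e * f = f * e" using idem_comm e f by blast
  have "s = s*(f*e)" using e f by (simp add: mult.assoc)
  have "t = s*(f*e)*f" using e f by (simp add: mult.assoc)
  also have "\<dots> = s*(e*f)*f" using c by simp
  also have "\<dots> = s*(e*f)" using f by (simp add: mult.assoc)
  also have "\<dots> = s*(f*e)" using c by simp
  finally show ?thesis using \<open>s = s*(f*e)\<close> by simp
qed

lemma le_mult_right: "intr_le (s::'a) t \<Longrightarrow> intr_le (s*a) (t*a)"
proof -
  assume "intr_le s t"
  then obtain f where "f*f=f" "s=f*t" using le_left by blast
  then have "f*f=f" "s*a = f*(t*a)" by (auto simp: mult.assoc)
  then show ?thesis using le_left by blast
qed

lemma le_mult_left: "intr_le (s::'a) t \<Longrightarrow> intr_le (a*s) (a*t)"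
proof -
  assume "intr_le s t"
  then obtain f where "f \<in> idempotents" "s=t*f" unfolding intr_le_def by blast
  then have "f \<in> idempotents" "a*s = (a*t)*f" by (auto simp: mult.assoc)
  then show ?thesis unfolding intr_le_def by blast
qed

lemma le_iv: "intr_le (s::'a) t \<Longrightarrow> intr_le (iv s) (iv t)"
proof -
  assume "intr_le s t"
  then obtain e where "e*e=e" "s=t*e" unfolding intr_le_def idempotents_def by blast
  then have "e*e=e" "iv s = e * iv t" using iv_mult[of t e] iv_idem[of e] by auto
  then show ?thesis using le_left by blast
qed

lemma le_idem_left: "(f::'a) * f = f \<Longrightarrow> intr_le (f*b) b"
  using le_left by blast

lemma le_idem_right: "(f::'a) * f = f \<Longrightarrow> intr_le (b*f) b"
  unfolding intr_le_def idempotents_def by blast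

lemma below_idem: "intr_le (s::'a) e \<Longrightarrow> e * e = e \<Longrightarrow> s * s = s"
proof -
  assume "intr_le s e" "e*e=e"
  then obtain f where "f*f=f" "s=e*f" unfolding intr_le_def idempotents_def by blast
  then show ?thesis using idem_prod_idem[of e f] \<open>e*e=e\<close> by simp
qed

lemma idem_le_iff: "(t::'a) * t = t \<Longrightarrow> g * g = g \<Longrightarrow> intr_le t g \<longleftrightarrow> t = g * t"
proof
  assume a: "t*t = t" "g*g = g" "intr_le t g"
  from a(3) obtain f where f: "t = g*f" unfolding intr_le_def by blast
  have "g*t = (g*g)*f" unfolding f by (simp only: mult.assoc)
  also have "\<dots> = t" unfolding a(2) f ..
  finally show "t = g*t" by (rule sym)
next
  assume a: "t*t = t" "g*g = g" "t = g*t"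
  have "t * g = g * t" using idem_comm a(1,2) by blast
  then have "t = t * g" using a(3) by simp
  then show "intr_le t g" unfolding le_left using a(1) by blast
qed

lemma le_left_form: "intr_le (s::'a) t \<Longrightarrow> s = (s * iv s) * t"
proof -
  assume "intr_le s t"
  then obtain f where f: "f*f=f" "s = f*t" using le_left by blast
  have c: "f * (t * iv t) = (t * iv t) * f" by (rule idem_comm) (simp_all add: f)
  have "s * iv s = f * t * iv t * f" using f iv_mult[of f t] iv_idem[of f] by (simp add: mult.assoc)
  then have "(s * iv s) * t = f * ((t * iv t) * f) * t" by (simp add: mult.assoc)
  also have "\<dots> = f * ((f * (t * iv t)) * t)" using c by (simp only: mult.assoc)
  also have "\<dots> = (f * f) * (t * iv t * t)" by (simp only: mult.assoc)
  finally show ?thesis using f by simp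
qed

lemma way_below_le: "way_below intr_le UNIV (t::'a) x \<Longrightarrow> intr_le t x"
  unfolding way_below_def
  apply (drule spec[of _ "{x}"], drule spec[of _ x])
  by (auto simp: directed_def is_sup_def is_upper_def le_refl)

lemma mono_ivs: "intr_le (x::'a) z \<Longrightarrow> intr_le (iv x * x) (iv z * z)"
proof -
  assume a: "intr_le x z"
  have "intr_le (iv x * x) (iv z * x)" using le_mult_right[OF le_iv[OF a]] .
  moreover have "intr_le (iv z * x) (iv z * z)" using le_mult_left[OF a] .
  ultimately show ?thesis by (rule le_trans)
qed

lemma sup_ivs:
  assumes su: "is_sup intr_le UNIV A (a::'a)"
  shows "is_sup intr_le UNIV ((\<lambda>d. iv d * d) ` A) (iv a * a)"
proof -
  have up: "\<And>d. d \<in> A \<Longrightarrow> intr_le d a" using su by (auto simp: is_sup_def is_upper_def)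
  have least: "\<And>v. is_upper intr_le A v \<Longrightarrow> intr_le a v" using su by (auto simp: is_sup_def)
  show ?thesis unfolding is_sup_def
  proof (intro conjI ballI impI)
    show "is_upper intr_le ((\<lambda>d. iv d * d) ` A) (iv a * a)"
      unfolding is_upper_def using up mono_ivs by blast
  next
    fix b assume b: "is_upper intr_le ((\<lambda>d. iv d * d) ` A) b"
    have "intr_le a (a*b)"
    proof (rule least, unfold is_upper_def, intro ballI)
      fix d assume d: "d \<in> A"
      have "intr_le (iv d * d) b" using b d unfolding is_upper_def by blast
      then have "intr_le (d * (iv d * d)) (d * b)" by (rule le_mult_left)
      then have "intr_le d (d*b)" by simp
      moreover have "intr_le (d*b) (a*b)" using le_mult_right[OF up[OF d]] .
      ultimately show "intr_le d (a*b)" by (rule le_trans)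
    qed
    then have "a = (a * iv a) * (a*b)" by (rule le_left_form)
    then have "iv a * a = iv a * ((a * iv a) * (a*b))" by simp
    also have "\<dots> = (iv a * a) * b" by (simp add: mult.assoc)
    finally have "iv a * a = (iv a * a) * b" .
    then show "intr_le (iv a * a) b" using le_idem_left[of "iv a * a" b] by simp
  qed simp
qed

lemma meet_cont:
  assumes C: "continuous_semigroup TYPE('a)"
    and dir: "directed intr_le F" and su: "is_sup intr_le UNIV F (f::'a)"
    and ff: "f * f = f" and ee: "e * e = e"
  shows "is_sup intr_le UNIV ((\<lambda>g. g * e) ` F) (f * e)"
proof -
  have up: "\<And>g. g \<in> F \<Longrightarrow> intr_le g f" using su by (auto simp: is_sup_def is_upper_def)
  have fe: "(f*e)*(f*e) = f*e" using idem_prod_idem[OF ff ee] .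
  have W: "is_sup intr_le UNIV {t\<in>UNIV. way_below intr_le UNIV t (f*e)} (f*e)"
    using C unfolding continuous_semigroup_def continuous_poset_def by blast
  show ?thesis unfolding is_sup_def
  proof (intro conjI ballI impI)
    show "is_upper intr_le ((\<lambda>g. g * e) ` F) (f * e)"
      unfolding is_upper_def using up le_mult_right by blast
  next
    fix b assume b: "is_upper intr_le ((\<lambda>g. g * e) ` F) b"
    have "is_upper intr_le {t\<in>UNIV. way_below intr_le UNIV t (f*e)} b"
      unfolding is_upper_def
    proof (intro ballI)
      fix t assume "t \<in> {t\<in>UNIV. way_below intr_le UNIV t (f*e)}"
      then have wb: "way_below intr_le UNIV t (f*e)" by simp
      have tfe: "intr_le t (f*e)" using way_below_le[OF wb] .
      have "intr_le (f*e) f" using le_idem_right[OF ee] .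
      then obtain g where g: "g \<in> F" "intr_le t g"
        using wb dir su unfolding way_below_def by blast
      have gg: "g*g = g" using below_idem[OF up[OF g(1)] ff] .
      have tt: "t*t = t" using below_idem[OF tfe fe] .
      have t1: "t = (f*e)*t" using idem_le_iff[OF tt fe] tfe by blast
      have t2: "t = g*t" using idem_le_iff[OF tt gg] g(2) by blast
      have c: "f*e = e*f" using idem_comm[OF ff ee] .
      have "e*t = e*((e*f)*t)" using t1 c by simp
      also have "\<dots> = (e*e)*f*t" by (simp add: mult.assoc)
      also have "\<dots> = t" using ee t1 c by (simp add: mult.assoc)
      finally have et: "e*t = t" .
      have "(g*e)*t = t" using et t2 by (simp add: mult.assoc)
      then have "intr_le t (g*e)" using idem_le_iff[OF tt idem_prod_idem[OF gg ee]] by simp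
      moreover have "intr_le (g*e) b" using b g(1) unfolding is_upper_def by blast
      ultimately show "intr_le t b" by (rule le_trans)
    qed
    then show "intr_le (f*e) b" using W unfolding is_sup_def by blast
  qed simp
qed

lemma directed_ivs:
  assumes "directed intr_le (D::'a set)"
  shows "directed intr_le ((\<lambda>d. iv d * d) ` D)"
  using assms mono_ivs unfolding directed_def by blast

lemma idem_case:
  assumes C: "continuous_semigroup TYPE('a)"
    and dir: "directed intr_le D" and su: "is_sup intr_le UNIV D (u::'a)"
    and ee: "e * e = e" and v: "\<And>d. d \<in> D \<Longrightarrow> intr_le (d*e) v"
  shows "intr_le (u*e) v"
proof -
  have up: "\<And>d. d \<in> D \<Longrightarrow> intr_le d u" using su by (auto simp: is_sup_def is_upper_def)
  define x where "x = iv u * u * e"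
  have xs: "is_sup intr_le UNIV ((\<lambda>g. g * e) ` ((\<lambda>d. iv d * d) ` D)) x"
    unfolding x_def
    by (rule meet_cont[OF C directed_ivs[OF dir] sup_ivs[OF su] idem_ivs ee])
  have xx: "x * x = x" unfolding x_def using idem_prod_idem[OF idem_ivs ee] .
  have key: "intr_le (iv d * d * e) (iv u * v * x)" if d: "d \<in> D" for d
  proof -
    define y where "y = iv d * d * e"
    have yy: "y*y = y" unfolding y_def using idem_prod_idem[OF idem_ivs ee] .
    have ce: "e * (iv d * d) = (iv d * d) * e" using idem_comm[OF ee idem_ivs] .
    have "d = u * (iv d * d)" using up[OF d] le_right by blast
    then have "d*e = (u*(iv d*d))*e" by (rule arg_cong)
    then have a: "d*e = u*y" unfolding y_def by (simp only: mult.assoc)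
    have "d*e = v*(iv (d*e) * (d*e))" using v[OF d] le_right by blast
    moreover have "iv (d*e) * (d*e) = y"
    proof -
      have "iv (d*e) * (d*e) = e * (iv d * d) * e" using iv_mult[of d e] iv_idem[OF ee] by (simp add: mult.assoc)
      also have "\<dots> = (iv d * d) * (e * e)" using ce by (simp add: mult.assoc)
      finally show ?thesis using ee y_def by simp
    qed
    ultimately have b: "u*y = v*y" using a by simp
    have "intr_le (iv d * d) (iv u * u)" using mono_ivs[OF up[OF d]] .
    then have "iv d * d = (iv u * u) * (iv d * d)" using idem_le_iff[OF idem_ivs idem_ivs] by blast
    then have "y = iv u * (u * y)" unfolding y_def by (metis mult.assoc)
    then have y1: "y = iv u * (v * y)" using b by simp
    have "y \<in> (\<lambda>g. g * e) ` ((\<lambda>d. iv d * d) ` D)" unfolding y_def using d by blast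
    then have "intr_le y x" using xs unfolding is_sup_def is_upper_def by blast
    then have "y = x * y" using idem_le_iff[OF yy xx] by blast
    then have "y = (iv u * v * x) * y" using y1 by (metis mult.assoc)
    then show ?thesis unfolding y_def[symmetric] intr_le_def idempotents_def using yy by blast
  qed
  have "intr_le x (iv u * v * x)"
    using xs key unfolding is_sup_def is_upper_def by blast
  then have "x = (iv u * v * x) * (iv x * x)" using le_right by blast
  then have x2: "x = iv u * v * x" using iv_idem[OF xx] xx by (simp add: mult.assoc)
  have "u * e = u * x" unfolding x_def by (simp add: mult.assoc)
  also have "\<dots> = (u * iv u) * (v * x)" using x2 by (metis mult.assoc)
  finally have "u * e = (u * iv u) * (v * x)" .
  then have "intr_le (u*e) (v*x)" using le_idem_left[OF idem_siv] by simp
  moreover have "intr_le (v*x) v" using le_idem_right[OF xx] .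
  ultimately show ?thesis by (rule le_trans)
qed

lemma sep_scott:
  assumes C: "continuous_semigroup TYPE('a)"
  shows "separately_scott_continuous TYPE('a)"
  unfolding separately_scott_continuous_def
proof (intro allI impI)
  fix D :: "'a set" and u s
  assume a: "directed intr_le D \<and> is_sup intr_le UNIV D u"
  have up: "\<And>d. d \<in> D \<Longrightarrow> intr_le d u" using a by (auto simp: is_sup_def is_upper_def)
  show "is_sup intr_le UNIV ((\<lambda>d. d * s) ` D) (u * s)" unfolding is_sup_def
  proof (intro conjI ballI impI)
    show "is_upper intr_le ((\<lambda>d. d * s) ` D) (u * s)"
      unfolding is_upper_def using up le_mult_right by blast
  next
    fix v assume v: "is_upper intr_le ((\<lambda>d. d * s) ` D) v"
    have "intr_le (u * (s * iv s)) (v * iv s)"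
    proof (rule idem_case[OF C _ _ idem_siv])
      show "directed intr_le D" "is_sup intr_le UNIV D u" using a by auto
    next
      fix d assume "d \<in> D"
      then have "intr_le (d*s) v" using v unfolding is_upper_def by blast
      then have "intr_le (d*s*iv s) (v * iv s)" by (rule le_mult_right)
      then show "intr_le (d * (s * iv s)) (v * iv s)" by (simp add: mult.assoc)
    qed
    then have "intr_le (u * (s * iv s) * s) (v * iv s * s)" by (rule le_mult_right)
    then have "intr_le (u * s) (v * (iv s * s))" by (simp add: mult.assoc)
    moreover have "intr_le (v * (iv s * s)) v" using le_idem_right[OF idem_ivs] .
    ultimately show "intr_le (u * s) v" by (rule le_trans)
  qed simp
qed

end

theorem lemma5p1:
  assumes "inverse_semigroup TYPE('a::semigroup_mult)"
    and "mirror_semigroup TYPE('a)"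
    and "continuous_semigroup TYPE('a)"
  shows "separately_scott_continuous TYPE('a)"
  using sep_scott[OF assms(1) assms(3)] .

end
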